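(* Let $u, v_1, \ldots, v_n \in \mathcal{L}_s$. Then $u \leqslant_{\mathcal{L}} \max(v_1, \ldots, v_n)$ if and only if there exists $i$ such that $u \leqslant_{\mathcal{L}} v_i$.
   Context: $\mathcal{X}$ is a countable set of variables; a valuation is $\sigma\colon\mathcal{X}\to\mathbb{N}$. For finite $E\subseteq\mathcal{X}$, $x\in\mathcal{X}$, $S\in\mathbb{N}$, the sublevels $A(E,x,S)$ and $B(E,S)$ have values $[A(E,x,S)]_\sigma = 0$ if some $y\in E$ has $\sigma(y)=0$, and $\sigma(x)+S$ otherwise; $[B(E,S)]_\sigma=0$ if some $y\in E$ has $\sigma(y)=0$, and $S$ otherwise. $\mathcal{L}_s$ is the set of sublevels $A(E,x,S)$ with $x\in E$ and $B(E,S)$ with $S>0$. $\max$ of a finite family is evaluated pointwise (empty max has value $0$). $t_1\leqslant_{\mathcal{L}} t_2$ means $[t_1]_\sigma\le[t_2]_\sigma$ for every valuation $\sigma$. *)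

theory Defs
  imports Main "HOL-Library.Countable"
begin

text \<open>Sublevels over a countable set of variables 'x. Finite sets E are represented
  by 'x set together with a finiteness requirement in the membership predicate in_Ls.\<close>

datatype 'x sublevel = SubA "'x set" 'x nat | SubB "'x set" nat

fun sval :: "('x \<Rightarrow> nat) \<Rightarrow> 'x sublevel \<Rightarrow> nat" where
  "sval \<sigma> (SubA E x S) = (if \<exists>y\<in>E. \<sigma> y = 0 then 0 else \<sigma> x + S)"
| "sval \<sigma> (SubB E S) = (if \<exists>y\<in>E. \<sigma> y = 0 then 0 else S)"

fun in_Ls :: "'x sublevel \<Rightarrow> bool" where
  "in_Ls (SubA E x S) \<longleftrightarrow> finite E \<and> x \<in> E"
| "in_Ls (SubB E S) \<longleftrightarrow> finite E \<and> S > 0"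

definition max_val :: "('x \<Rightarrow> nat) \<Rightarrow> 'x sublevel list \<Rightarrow> nat" where
  "max_val \<sigma> vs = fold max (map (sval \<sigma>) vs) 0"

definition le_L_max :: "'x sublevel \<Rightarrow> 'x sublevel list \<Rightarrow> bool" where
  "le_L_max u vs \<longleftrightarrow> (\<forall>\<sigma>. sval \<sigma> u \<le> max_val \<sigma> vs)"

definition le_L :: "'x sublevel \<Rightarrow> 'x sublevel \<Rightarrow> bool" where
  "le_L t1 t2 \<longleftrightarrow> (\<forall>\<sigma>. sval \<sigma> t1 \<le> sval \<sigma> t2)"

end

theory Submission
  imports Defs
begin

lemma mv: "max_val \<sigma> vs = Max (insert 0 (sval \<sigma> ` set vs))"
  unfolding max_val_def using Max.set_eq_fold[of 0 "map (sval \<sigma>) vs", symmetric] by simp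

lemma mv_ge: "v \<in> set vs \<Longrightarrow> sval \<sigma> v \<le> max_val \<sigma> vs"
  unfolding mv by (simp add: Max_ge)

lemma mv_ex: "0 < max_val \<sigma> vs \<Longrightarrow> \<exists>v\<in>set vs. max_val \<sigma> vs = sval \<sigma> v"
proof -
  assume a: "0 < max_val \<sigma> vs"
  have "max_val \<sigma> vs \<in> insert 0 (sval \<sigma> ` set vs)" unfolding mv by (rule Max_in) auto
  with a show ?thesis by auto
qed

fun par :: "'x sublevel \<Rightarrow> nat" where
  "par (SubA E x S) = S" | "par (SubB E S) = S"

lemma par_le: "v \<in> set vs \<Longrightarrow> par v \<le> sum_list (map par vs)"
  by (simp add: member_le_sum_list)

theorem lemma36:
  fixes u :: "'x::countable sublevel" and vs :: "'x sublevel list"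
  assumes "in_Ls u" and "\<forall>v\<in>set vs. in_Ls v"
  shows "le_L_max u vs \<longleftrightarrow> (\<exists>v\<in>set vs. le_L u v)"
proof
  assume "\<exists>v\<in>set vs. le_L u v"
  then show "le_L_max u vs" unfolding le_L_max_def le_L_def using mv_ge le_trans by blast
next
  assume H: "le_L_max u vs"
  show "\<exists>v\<in>set vs. le_L u v"
  proof (cases u)
    case (SubA E x S)
    define N where "N = sum_list (map par vs) + 2"
    define \<sigma> where "\<sigma> = (\<lambda>z. if z = x then N else if z \<in> E then 1 else (0::nat))"
    have xE: "x \<in> E" using assms(1) SubA by simp
    have su: "sval \<sigma> u = N + S" using SubA xE by (auto simp: \<sigma>_def N_def split: if_splits)
    have "N + S \<le> max_val \<sigma> vs" using H su unfolding le_L_max_def by metis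
    moreover have "0 < N + S" by (simp add: N_def)
    ultimately obtain v where v: "v \<in> set vs" "N + S \<le> sval \<sigma> v" using mv_ex
      by (metis less_le_trans)
    have pv: "par v + 2 \<le> N" using par_le[OF v(1)] by (simp add: N_def)
    show ?thesis
    proof (cases v)
      case (SubA F y T)
      have nz: "\<forall>z\<in>F. \<sigma> z \<noteq> 0" using v(2) SubA \<open>0 < N + S\<close> by (auto split: if_splits)
      hence FE: "F \<subseteq> E" using xE by (auto simp: \<sigma>_def split: if_splits)
      have yx: "y = x"
      proof (rule ccontr)
        assume "y \<noteq> x"
        hence "sval \<sigma> v \<le> 1 + T" using SubA nz by (auto simp: \<sigma>_def)
        thus False using v(2) pv SubA by simp
      qed
      have "\<not> (\<exists>z\<in>F. \<sigma> z = 0)" using nz by blast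
      hence "sval \<sigma> v = \<sigma> x + T" using SubA yx by auto
      hence TS: "S \<le> T" using v(2) by (simp add: \<sigma>_def)
      have "le_L u v" unfolding le_L_def
      proof
        fix \<tau> :: "'x \<Rightarrow> nat"
        show "sval \<tau> u \<le> sval \<tau> v"
          using FE TS yx \<open>u = SubA E x S\<close> SubA by (auto, fastforce+)
      qed
      thus ?thesis using v(1) by blast
    next
      case (SubB F T)
      have "sval \<sigma> v \<le> T" using SubB by simp
      thus ?thesis using v(2) pv SubB by simp
    qed
  next
    case (SubB E S)
    define \<sigma> where "\<sigma> = (\<lambda>z. if z \<in> E then 1 else (0::nat))"
    have S0: "0 < S" using assms(1) SubB by simp
    have su: "sval \<sigma> u = S" using SubB by (auto simp: \<sigma>_def)
    have "S \<le> max_val \<sigma> vs" using H su unfolding le_L_max_def by metis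
    then obtain v where v: "v \<in> set vs" "S \<le> sval \<sigma> v" using mv_ex S0
      by (metis less_le_trans)
    show ?thesis
    proof (cases v)
      case (SubA F y T)
      have nz: "\<forall>z\<in>F. \<sigma> z \<noteq> 0" using v(2) SubA S0 by (auto split: if_splits)
      hence FE: "F \<subseteq> E" by (auto simp: \<sigma>_def split: if_splits)
      have yF: "y \<in> F" using assms(2) v(1) SubA by auto
      have "\<not> (\<exists>z\<in>F. \<sigma> z = 0)" using nz by blast
      hence "sval \<sigma> v = \<sigma> y + T" using SubA by auto
      hence TS: "S \<le> 1 + T" using v(2) yF FE by (auto simp: \<sigma>_def)
      have "le_L u v" unfolding le_L_def
      proof
        fix \<tau> :: "'x \<Rightarrow> nat"
        show "sval \<tau> u \<le> sval \<tau> v"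
        proof (cases "\<exists>z\<in>E. \<tau> z = 0")
          case True thus ?thesis using \<open>u = SubB E S\<close> by simp
        next
          case False
          hence "\<tau> y \<ge> 1" using yF FE by (simp add: Suc_le_eq subset_iff)
          thus ?thesis using False FE TS \<open>u = SubB E S\<close> SubA by (auto, fastforce)
        qed
      qed
      thus ?thesis using v(1) by blast
    next
      case (SubB F T)
      have nz: "\<forall>z\<in>F. \<sigma> z \<noteq> 0" using v(2) SubB S0 by (auto split: if_splits)
      hence FE: "F \<subseteq> E" by (auto simp: \<sigma>_def split: if_splits)
      have "\<not> (\<exists>z\<in>F. \<sigma> z = 0)" using nz by blast
      hence "sval \<sigma> v = T" using SubB by auto
      hence TS: "S \<le> T" using v(2) by simp
      have "le_L u v" unfolding le_L_def
      proof
        fix \<tau> :: "'x \<Rightarrow> nat"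
        show "sval \<tau> u \<le> sval \<tau> v"
          using FE TS \<open>u = SubB E S\<close> SubB by (auto, fastforce+)
      qed
      thus ?thesis using v(1) by blast
    qed
  qed
qed

end
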